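(* Let $n\ge2$, $\rho>0$ and $\varpi\in S^{n-1}$. Let ${}^tP(\tau,\xi) = -\tau^2 + \xi\cdot\xi - i\tau\,\xi\cdot\xi$ for $(\tau,\xi)\in\mathbb{C}\times\mathbb{C}^n$, $\widetilde{\zeta^o} = (i\rho^2, i\rho\varpi)$, ${}^tP_o(\zeta) = {}^tP(\zeta+\widetilde{\zeta^o})$ and $\widetilde N = (-1,0,\ldots,0)\in\mathbb{R}\times\mathbb{R}^n$. Let $\sigma(\zeta)$ be a solution of ${}^tP_o(\zeta+\sigma\widetilde N) = 0$, $\zeta = (\tau,\xi)\in\mathbb{C}\times\mathbb{C}^n$. If $\sigma$ is analytic and single-valued in a ball $B\subset\mathbb{C}\times\mathbb{C}^n$ with real center and radius $1$, then $\sup_{\zeta\in B}\operatorname{Im}\sigma(\zeta)\ge0$. *)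

theory Defs
  imports "HOL-Analysis.Analysis"
begin

text \<open>Points of C x C^n are pairs (tau, xi) with xi :: complex^'n.
  The norm on the product type is the Euclidean one.\<close>

definition cscale :: "complex \<Rightarrow> complex \<times> (complex^'n) \<Rightarrow> complex \<times> (complex^'n)" where
  "cscale s z = (s * fst z, \<chi> j. s * (snd z $ j))"

text \<open>Bilinear (not Hermitian) dot product on C^n.\<close>
definition cdot :: "complex^'n \<Rightarrow> complex^'n \<Rightarrow> complex" where
  "cdot xi eta = (\<Sum>j\<in>UNIV. xi $ j * eta $ j)"

definition tP :: "complex \<times> (complex^'n) \<Rightarrow> complex" where
  "tP z = - ((fst z)^2) + cdot (snd z) (snd z) - \<i> * fst z * cdot (snd z) (snd z)"

definition zeta_o :: "real \<Rightarrow> real^'n \<Rightarrow> complex \<times> (complex^'n)" where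
  "zeta_o \<rho> w = (\<i> * complex_of_real (\<rho>^2), \<chi> j. \<i> * complex_of_real \<rho> * complex_of_real (w $ j))"

definition tP_o :: "real \<Rightarrow> real^'n \<Rightarrow> complex \<times> (complex^'n) \<Rightarrow> complex" where
  "tP_o \<rho> w z = tP (z + zeta_o \<rho> w)"

definition Ntilde :: "complex \<times> (complex^'n)" where
  "Ntilde = (-1, 0)"

definition creal :: "real \<times> (real^'n) \<Rightarrow> complex \<times> (complex^'n)" where
  "creal x = (complex_of_real (fst x), \<chi> j. complex_of_real (snd x $ j))"

definition holo_several :: "(complex \<times> (complex^'n) \<Rightarrow> complex) \<Rightarrow> (complex \<times> (complex^'n)) set \<Rightarrow> bool" where
  "holo_several f S \<longleftrightarrow> (\<forall>z\<in>S. \<exists>D. (f has_derivative D) (at z) \<and> (\<forall>v. D (cscale \<i> v) = \<i> * D v))"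

end

theory Submission imports Defs begin
lemma root_bound:
  fixes T Q :: complex and \<rho> :: real
  assumes "- (T ^ 2) + Q - \<i> * T * Q = 0" "Re Q + \<rho> ^ 2 \<ge> 0"
  shows "Im T < 1 + \<rho> ^ 2"
proof (rule ccontr)
  assume nc: "\<not> Im T < 1 + \<rho> ^ 2"
  define a where "a = Re Q" define b where "b = Im Q"
  define u where "u = Re T" define v where "v = Im T"
  have e1: "a * (1+v) + b * u = u ^ 2 - v ^ 2" and e2: "b * (1+v) - a * u = 2 * u * v"
    using arg_cong[OF assms(1), of Re] arg_cong[OF assms(1), of Im]
    by (auto simp: a_def b_def u_def v_def power2_eq_square algebra_simps)
  have key: "a * ((1+v) ^ 2 + u ^ 2) = u ^ 2 * (1-v) - v ^ 2 * (1+v)"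
  proof -
    have "a * ((1+v) ^ 2 + u ^ 2) = (a * (1+v) + b * u) * (1+v) - (b * (1+v) - a * u) * u"
      by (simp add: algebra_simps power2_eq_square)
    also have "\<dots> = u ^ 2 * (1-v) - v ^ 2 * (1+v)" unfolding e1 e2
      by (simp add: algebra_simps power2_eq_square)
    finally show ?thesis .
  qed
  have v: "v \<ge> 1 + \<rho> ^ 2" using nc v_def by simp
  have a: "a \<ge> - (\<rho> ^ 2)" using assms(2) a_def by simp
  have "u ^ 2 * (1-v+\<rho> ^ 2) \<le> 0" using v by (simp add: mult_nonneg_nonpos)
  moreover have "v ^ 2 - (\<rho> ^ 2) * (1+v) \<ge> 1"
  proof -
    have "\<rho> ^ 2 * (1+v) \<le> (v-1) * (1+v)" using v by (intro mult_right_mono; smt (verit) zero_le_power2)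
    thus ?thesis by (simp add: algebra_simps power2_eq_square)
  qed
  moreover have "(1+v) * (v ^ 2 - (\<rho> ^ 2) * (1+v)) > 0" using v calculation(2)
    by (smt (verit) mult_pos_pos zero_le_power2)
  moreover have "a * ((1+v) ^ 2 + u ^ 2) \<ge> - (\<rho> ^ 2) * ((1+v) ^ 2 + u ^ 2)"
    using a by (intro mult_right_mono) auto
  ultimately show False using key
    by (simp add: algebra_simps power2_eq_square)
qed

theorem lemma2:
  fixes \<rho> :: real and w :: "real^'n" and c :: "real \<times> (real^'n)"
    and \<sigma> :: "complex \<times> (complex^'n) \<Rightarrow> complex"
  assumes "CARD('n) \<ge> 2"
    and "\<rho> > 0"
    and "norm w = 1"
    and "holo_several \<sigma> (ball (creal c) 1)"
    and "\<forall>z\<in>ball (creal c) 1. tP_o \<rho> w (z + cscale (\<sigma> z) Ntilde) = 0"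
  shows "(SUP z\<in>ball (creal c) 1. ereal (Im (\<sigma> z))) \<ge> 0"
proof -
  obtain t x where c: "c = (t, x)" by (cases c)
  define X :: "complex^'n" where "X = (\<chi> j. complex_of_real (x $ j) + \<i> * complex_of_real \<rho> * complex_of_real (w $ j))"
  define Q where "Q = cdot X X"
  have w1: "(\<Sum>j\<in>UNIV. (w $ j)^2) = 1"
    using assms(3) by (simp add: norm_vec_def L2_set_def)
  have ReQ: "Re Q = (\<Sum>j\<in>UNIV. (x $ j)^2) - \<rho>^2 * (\<Sum>j\<in>UNIV. (w $ j)^2)"
    by (simp add: Q_def cdot_def X_def Re_sum sum_subtractf sum_distrib_left power2_eq_square algebra_simps)
  have ReQ': "Re Q + \<rho>^2 \<ge> 0"
    using ReQ w1 by (simp add: sum_nonneg)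
  define z :: "real \<Rightarrow> complex \<times> (complex^'n)"
    where "z s = (complex_of_real t + \<i> * complex_of_real s, \<chi> j. complex_of_real (x $ j))" for s
  have zin: "z s \<in> ball (creal c) 1" if "\<bar>s\<bar> < 1" for s
  proof -
    have "creal c - z s = (- (\<i> * complex_of_real s), 0)"
      by (simp add: c creal_def z_def vec_eq_iff)
    hence "dist (creal c) (z s) = \<bar>s\<bar>"
      by (simp add: dist_norm norm_Pair norm_mult)
    thus ?thesis using that by simp
  qed
  have bound: "Im (\<sigma> (z s)) > s - 1" if "\<bar>s\<bar> < 1" for s
  proof -
    define T where "T = complex_of_real t + \<i> * complex_of_real s - \<sigma> (z s) + \<i> * complex_of_real (\<rho>^2)"
    have "z s + cscale (\<sigma> (z s)) Ntilde + zeta_o \<rho> w = (T, X)"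
      by (simp add: z_def cscale_def Ntilde_def zeta_o_def T_def X_def vec_eq_iff)
    hence "tP_o \<rho> w (z s + cscale (\<sigma> (z s)) Ntilde) = - (T^2) + Q - \<i> * T * Q"
      by (simp add: tP_o_def tP_def Q_def)
    hence eq: "- (T^2) + Q - \<i> * T * Q = 0" using assms(5) zin[OF that] by simp
    have "Im T < 1 + \<rho>^2" by (rule root_bound[OF eq ReQ'])
    moreover have "Im T = s - Im (\<sigma> (z s)) + \<rho>^2" by (simp add: T_def)
    ultimately show ?thesis by simp
  qed
  show ?thesis
  proof (rule ereal_le_epsilon2)
    fix e :: real assume e: "e > 0"
    define s where "s = max 0 (1 - e)"
    have s: "\<bar>s\<bar> < 1" using e by (simp add: s_def)
    have "ereal (- e) \<le> ereal (Im (\<sigma> (z s)))" using bound[OF s] by (simp add: s_def)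
    also have "\<dots> \<le> (SUP z\<in>ball (creal c) 1. ereal (Im (\<sigma> z)))"
      by (rule SUP_upper) (rule zin[OF s])
    finally show "0 \<le> (SUP z\<in>ball (creal c) 1. ereal (Im (\<sigma> z))) + ereal e"
      by (cases "(SUP z\<in>ball (creal c) 1. ereal (Im (\<sigma> z)))") auto
  qed
qed

end
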